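(* Let $t=t(z)$ denote the unique formal power series in $z$ (in fact a power series in $z^3$) with zero constant term satisfying $z^3=t(1-t)^2$; thus $t=z^3+2z^6+\cdots$. Then for every $k\ge 0$, \[ f_k(z)=\frac{t^k}{z^k(1-t)}\qquad\text{and}\qquad g_k(z)=\frac{t^{k+1}}{z^{k+2}}, \] where the right-hand sides are interpreted as formal power series in $z$ (they are, since $t/z^3$ is a power series with constant term $1$).
   Context: An S-Motzkin path is a lattice path from $(0,0)$ using up steps $u=(1,1)$, horizontal steps $h=(1,0)$ and down steps $d=(1,-1)$, never going below the $x$-axis, ending on the $x$-axis, such that after deleting the down steps the remaining word is $huhu\cdots hu$. Partial S-Motzkin paths are their prefixes. The numbers $a_{n,k}$ (resp. $b_{n,k}$), $n,k\ge0$, count partial S-Motzkin paths of length $n$ ending at height $k$ whose last non-down step is an up step (resp. a horizontal step); equivalently they are defined by $a_{0,0}=1$, $b_{0,0}=0$, $a_{0,k}=b_{0,k}=0$ for $k\ge1$, and for $n\ge1$, $k\ge0$: $a_{n,k}=b_{n-1,k-1}+a_{n-1,k+1}$, $b_{n,k}=a_{n-1,k}+b_{n-1,k+1}$, with $b_{n-1,-1}=0$. Generating functions: $f_k(z)=\sum_{n\ge0}a_{n,k}z^n$, $g_k(z)=\sum_{n\ge0}b_{n,k}z^n$. *)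

theory Defs
  imports "HOL-Computational_Algebra.Formal_Power_Series"
begin

text \<open>Counting numbers a_{n,k}, b_{n,k} of partial S-Motzkin paths, via the recurrences
  (with the convention b_{n-1,-1} = 0).\<close>

fun smotz_a :: "nat \<Rightarrow> nat \<Rightarrow> nat" and smotz_b :: "nat \<Rightarrow> nat \<Rightarrow> nat" where
  "smotz_a 0 k = (if k = 0 then 1 else 0)"
| "smotz_b 0 k = 0"
| "smotz_a (Suc n) k = (if k = 0 then 0 else smotz_b n (k - 1)) + smotz_a n (Suc k)"
| "smotz_b (Suc n) k = smotz_a n k + smotz_b n (Suc k)"

definition smotz_f :: "nat \<Rightarrow> rat fps" where
  "smotz_f k = Abs_fps (\<lambda>n. of_nat (smotz_a n k))"

definition smotz_g :: "nat \<Rightarrow> rat fps" where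
  "smotz_g k = Abs_fps (\<lambda>n. of_nat (smotz_b n k))"

end

theory Submission
  imports Defs
begin

lemma key_coeffs:
  fixes s t :: "rat fps"
  assumes r1: "s * (1 - t)^2 = 1" and r2: "t = fps_X^3 * s"
  defines "F \<equiv> \<lambda>k. fps_X^(2*k) * s^(k+1) * (1 - t)"
    and "G \<equiv> \<lambda>k. fps_X^(2*k+1) * s^(k+1)"
  shows "\<forall>k. fps_nth (F k) (n) = of_nat (smotz_a n k) \<and> fps_nth (G k) (n) = of_nat (smotz_b n k)"
proof -
  have t0: "fps_nth (t) (0) = 0" using r2 by (simp add: fps_X_power_mult_nth)
  have s0: "fps_nth (s) (0) = 1"
  proof -
    have "fps_nth ((s * (1 - t)^2)) (0) = 1" using r1 by simp
    thus ?thesis using t0 by (simp add: power2_eq_square)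
  qed
  have e: "s * (1 - t) = 1 + fps_X^3 * s^2 * (1 - t)"
  proof -
    have "s * (1 - t) - (1 + t * s * (1 - t)) = s * (1 - t)^2 - 1"
      by (simp add: algebra_simps power2_eq_square)
    hence "s * (1 - t) = 1 + t * s * (1 - t)" using r1 by simp
    thus ?thesis using r2 by (simp add: algebra_simps power2_eq_square)
  qed
  have recF: "F k = (if k = 0 then 1 else fps_X * G (k - 1)) + fps_X * F (k + 1)" for k
  proof (cases k)
    case 0
    have a1: "F 0 = s * (1 - t)" by (simp add: F_def)
    have a2: "fps_X * F (0 + 1) = fps_X^3 * s^2 * (1 - t)"
      by (simp add: F_def eval_nat_numeral mult_ac)
    show ?thesis using e a1 a2 0 by simp
  next
    case (Suc m)
    have f1: "F k = fps_X^(2*m) * s^m * (fps_X^2 * s^2 * (1-t))"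
      by (simp add: F_def Suc power_add mult_ac power2_eq_square)
    have g1: "fps_X * G (k - 1) = fps_X^(2*m) * s^m * (fps_X^2 * s)"
      by (simp add: G_def Suc power_add mult_ac power2_eq_square)
    have f2: "fps_X * F (k + 1) = fps_X^(2*m) * s^m * (fps_X^5 * s^3 * (1-t))"
      by (simp add: F_def Suc power_add mult_ac eval_nat_numeral)
    have "fps_X^2 * s^2 * (1-t) = fps_X^2 * s + fps_X^5 * s^3 * (1-t)"
    proof -
      have "fps_X^2 * s * (s * (1 - t)) = fps_X^2 * s * (1 + fps_X^3 * s^2 * (1 - t))"
        using e by simp
      thus ?thesis by (simp add: algebra_simps eval_nat_numeral)
    qed
    hence "F k = fps_X * G (k - 1) + fps_X * F (k + 1)"
      using f1 g1 f2 by (simp add: distrib_left)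
    thus ?thesis using Suc by simp
  qed
  have recG: "G k = fps_X * F k + fps_X * G (k + 1)" for k
  proof -
    have "fps_X * F k + fps_X * G (k + 1) = fps_X^(2*k+1) * s^(k+1) * ((1 - t) + fps_X^3 * s)"
      by (simp add: F_def G_def algebra_simps power_add mult_2 eval_nat_numeral)
    also have "\<dots> = G k" using r2 by (simp add: G_def)
    finally show ?thesis by simp
  qed
  show ?thesis
  proof (induction n)
    case 0
    show ?case
    proof
      fix k
      show "fps_nth (F k) (0) = of_nat (smotz_a 0 k) \<and> fps_nth (G k) (0) = of_nat (smotz_b 0 k)"
      proof (cases k)
        case 0
        then show ?thesis using s0 t0 by (simp add: F_def G_def)
      next
        case (Suc m)
        then show ?thesis
          by (simp add: F_def G_def mult.assoc fps_X_power_mult_nth)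
      qed
    qed
  next
    case (Suc n)
    show ?case
    proof
      fix k
      have a: "fps_nth (F k) (Suc n) = of_nat (smotz_a (Suc n) k)"
        using Suc.IH
        by (subst recF) (cases k; simp)
      have b: "fps_nth (G k) (Suc n) = of_nat (smotz_b (Suc n) k)"
        using Suc.IH
        by (subst recG) simp
      show "fps_nth (F k) (Suc n) = of_nat (smotz_a (Suc n) k) \<and> fps_nth (G k) (Suc n) = of_nat (smotz_b (Suc n) k)"
        using a b by simp
    qed
  qed
qed

theorem mainTheorem1:
  fixes t :: "rat fps"
  assumes "fps_nth t 0 = 0"
    and "fps_X ^ 3 = t * (1 - t)^2"
  shows "\<forall>k. smotz_f k = t ^ k / (fps_X ^ k * (1 - t))
            \<and> smotz_g k = t ^ (k + 1) / fps_X ^ (k + 2)"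
proof
  fix k
  define s where "s = inverse ((1 - t)^2)"
  have u: "fps_nth (((1 - t)^2)) (0) \<noteq> 0" using assms(1) by (simp add: power2_eq_square)
  have r1: "s * (1 - t)^2 = 1" unfolding s_def using inverse_mult_eq_1[OF u] by simp
  have r2: "t = fps_X^3 * s" using assms(2) r1
    by (metis mult.assoc mult.commute mult_1_right s_def)
  define F where "F \<equiv> \<lambda>k. fps_X^(2*k) * s^(k+1) * (1 - t)"
  define G where "G \<equiv> \<lambda>k. fps_X^(2*k+1) * s^(k+1)"
  have kc: "\<forall>k. fps_nth (F k) (n) = of_nat (smotz_a n k) \<and> fps_nth (G k) (n) = of_nat (smotz_b n k)" for n
    using key_coeffs[OF r1 r2] unfolding F_def G_def by blast
  have fF: "smotz_f k = F k" unfolding smotz_f_def using kc by (simp add: fps_eq_iff)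
  have gG: "smotz_g k = G k" unfolding smotz_g_def using kc by (simp add: fps_eq_iff)
  have nz1: "fps_X ^ k * (1 - t) \<noteq> (0 :: rat fps)"
  proof
    assume "fps_X ^ k * (1 - t) = (0 :: rat fps)"
    hence "1 - t = 0" by simp
    hence "fps_nth ((1 - t)) (0) = 0" by simp
    thus False using assms(1) by simp
  qed
  have nz2: "fps_X ^ (k + 2) \<noteq> (0 :: rat fps)" by simp
  have h1: "t ^ k = F k * (fps_X ^ k * (1 - t))"
  proof -
    have "F k * (fps_X ^ k * (1 - t)) = (fps_X^(2*k) * fps_X^k) * s^k * (s * (1 - t)^2)"
      by (simp add: F_def mult_ac power2_eq_square)
    also have "\<dots> = fps_X^(3*k) * s^k * (s * (1 - t)^2)"
      by (simp add: power_add[symmetric])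
    also have "\<dots> = t ^ k" using r1 r2 by (simp add: power_mult_distrib power_mult)
    finally show ?thesis by simp
  qed
  have h2: "t ^ (k + 1) = G k * fps_X ^ (k + 2)"
  proof -
    have "G k * fps_X ^ (k + 2) = (fps_X^(2*k+1) * fps_X ^ (k + 2)) * s^(k+1)"
      by (simp add: G_def mult_ac)
    also have "\<dots> = fps_X^(3*k+3) * s^(k+1)"
    proof -
      have "(2*k+1)+(k+2) = 3*k+3" by simp
      hence "fps_X^(2*k+1) * fps_X ^ (k + 2) = (fps_X^(3*k+3) :: rat fps)"
        by (metis power_add)
      thus ?thesis by simp
    qed
    also have "\<dots> = t ^ (k + 1)"
    proof -
      have "(3::nat)*(k+1) = 3*k+3" by simp
      hence "(fps_X::rat fps)^(3*k+3) = (fps_X^3)^(k+1)" by (metis power_mult)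
      thus ?thesis using r2 by (simp add: power_mult_distrib)
    qed
    finally show ?thesis by simp
  qed
  show "smotz_f k = t ^ k / (fps_X ^ k * (1 - t)) \<and> smotz_g k = t ^ (k + 1) / fps_X ^ (k + 2)"
    using fF gG h1 h2 nz1 nz2 by simp
qed

end
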